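(* Assume GCH. Let $\lambda<\kappa$ be cardinals with $\mathrm{cf}(\kappa)\notin\{\mu^+ : \mathrm{cf}(\mu)=\omega\}$ and $\mathrm{cf}(\kappa)>\lambda>\aleph_0$. Then every $(\lambda,\kappa)$-graph contains a $(\lambda',\kappa)$-subgraph for some cardinal $\lambda'<\lambda$.
   Context: For infinite cardinals $\lambda<\kappa$, a $(\lambda,\kappa)$-graph is a bipartite graph with bipartition $(A,B)$, $|A|=\lambda$, $|B|=\kappa$, in which every vertex $b\in B$ has infinitely many neighbours in $A$. A $(\lambda',\kappa)$-subgraph of such a graph is a subgraph with bipartition $(C,D)$, $C\subseteq A$, $D\subseteq B$, which is itself a $(\lambda',\kappa)$-graph. *)

theory Defs
  imports Main "HOL-Library.Countable_Set"
begin

unbundle cardinal_syntax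

definition lk_graph :: "'a set \<Rightarrow> 'b set \<Rightarrow> ('a \<times> 'b) set \<Rightarrow> bool" where
  "lk_graph A B E \<longleftrightarrow> infinite A \<and> (card_of A) <o (card_of B) \<and> E \<subseteq> A \<times> B \<and>
     (\<forall>b\<in>B. infinite {a\<in>A. (a, b) \<in> E})"

definition is_cof :: "'b set \<Rightarrow> 'c rel \<Rightarrow> bool" where
  "is_cof X r \<longleftrightarrow> (\<exists>K\<subseteq>X. cofinal K (card_of X) \<and> (card_of K) =o r) \<and>
     (\<forall>K\<subseteq>X. cofinal K (card_of X) \<longrightarrow> r \<le>o (card_of K))"

definition countable_cof :: "'b set \<Rightarrow> bool" where
  "countable_cof X \<longleftrightarrow> infinite X \<and> (\<exists>K\<subseteq>X. cofinal K (card_of X) \<and> countable K)"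

text \<open>GCH, as far as it can be expressed for cardinals realised in the type 'b set set:
  for infinite X, no cardinal lies strictly between (card_of X) and 2^(card_of X).\<close>
definition GCH_on :: "'b itself \<Rightarrow> bool" where
  "GCH_on _ \<longleftrightarrow> (\<forall>(X::'b set) (Y::'b set set). infinite X \<and> (card_of X) <o (card_of Y) \<longrightarrow> (card_of (Pow X)) \<le>o (card_of Y))"

end

theory Submission
  imports Defs
begin

lemma countable_iff_leq_nat: "countable S \<longleftrightarrow> |S| \<le>o |UNIV::nat set|"
  unfolding countable_def card_of_ordLeq[symmetric] by auto

lemma countable_less_uncountable:
  assumes "countable (C::'c set)" "uncountable (A::'d set)" shows "|C| <o |A|"
proof -
  have "|C| <o |A| \<or> |A| \<le>o |C|" using ordLess_or_ordLeq[OF card_of_Well_order card_of_Well_order, of C A] .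
  moreover have "\<not> |A| \<le>o |C|"
  proof
    assume "|A| \<le>o |C|"
    then have "|A| \<le>o |UNIV::nat set|" using assms(1) countable_iff_leq_nat ordLeq_transitive by blast
    then show False using assms(2) countable_iff_leq_nat by blast
  qed
  ultimately show ?thesis by blast
qed

lemma times_less:
  assumes inf: "infinite X" and P: "|P| <o (card_of X)" and Q: "|Q| <o (card_of X)"
  shows "|P \<times> Q| <o (card_of X)"
proof (cases "P = {} \<or> Q = {}")
  case True
  then have "finite (P \<times> Q)" by auto
  then show ?thesis using finite_ordLess_infinite[OF card_of_Well_order card_of_Well_order, of "P \<times> Q" X] inf unfolding Field_card_of by blast
next
  case False
  have "|Q| \<le>o |P| \<or> |P| \<le>o |Q|" using ordLess_or_ordLeq[OF card_of_Well_order card_of_Well_order, of Q P] ordLess_imp_ordLeq by blast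
  then show ?thesis
  proof
    assume le: "|Q| \<le>o |P|"
    show ?thesis
    proof (cases "finite P")
      case True
      then have "finite Q" using le card_of_ordLeq_finite by blast
      then have "finite (P \<times> Q)" using True by simp
      then show ?thesis using finite_ordLess_infinite[OF card_of_Well_order card_of_Well_order, of "P \<times> Q" X] inf unfolding Field_card_of by blast
    next
      case False
      then have "|P \<times> Q| =o |P|" using card_of_Times_infinite[of P Q] le \<open>\<not>(P = {} \<or> Q = {})\<close> by blast
      then show ?thesis using P ordIso_ordLess_trans by blast
    qed
  next
    assume le: "|P| \<le>o |Q|"
    show ?thesis
    proof (cases "finite Q")
      case True
      then have "finite P" using le card_of_ordLeq_finite by blast
      then have "finite (P \<times> Q)" using True by simp
      then show ?thesis using finite_ordLess_infinite[OF card_of_Well_order card_of_Well_order, of "P \<times> Q" X] inf unfolding Field_card_of by blast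
    next
      case False
      then have "|P \<times> Q| =o |Q|" using card_of_Times_infinite[of Q P] le \<open>\<not>(P = {} \<or> Q = {})\<close> by blast
      then show ?thesis using Q ordIso_ordLess_trans by blast
    qed
  qed
qed

lemma below_underS:
  assumes "Y <o (card_of X)" "Well_order Y"
  shows "\<exists>a\<in>X. |Field Y| \<le>o |underS (card_of X) a|"
proof -
  have "\<exists>a\<in>Field (card_of X). Y =o Restr (card_of X) (underS (card_of X) a)"
    using assms(1) unfolding ordLess_iff_ordIso_Restr[OF card_of_Well_order assms(2)] .
  then obtain a where a: "a \<in> Field (card_of X)" "Y =o Restr (card_of X) (underS (card_of X) a)"
    by (elim bexE) simp
  have wo: "wo_rel (card_of X)" unfolding wo_rel_def by (rule card_of_Well_order)
  have F: "Field (Restr (card_of X) (underS (card_of X) a)) = underS (card_of X) a"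
    by (rule Field_Restr_ofilter[OF card_of_Well_order wo_rel.underS_ofilter[OF wo]])
  have "Y \<le>o Restr (card_of X) (underS (card_of X) a)" using a(2) unfolding ordIso_iff_ordLeq by (rule conjunct1)
  then have "|Field Y| \<le>o |Field (Restr (card_of X) (underS (card_of X) a))|" by (rule card_of_mono2)
  then have "|Field Y| \<le>o |underS (card_of X) a|" unfolding F .
  moreover have "a \<in> X" using a(1) unfolding Field_card_of .
  ultimately show ?thesis by blast
qed

lemma wo_le_total:
  assumes "a \<in> X" "b \<in> X" "\<not> (a \<noteq> b \<and> (a, b) \<in> (card_of X))"
  shows "(b, a) \<in> (card_of X)"
proof -
  have W: "Well_order (card_of X)" by (rule card_of_Well_order)
  then have R: "Refl (card_of X)" and T: "Total (card_of X)"
    unfolding well_order_on_def linear_order_on_def partial_order_on_def preorder_on_def by auto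
  have aF: "a \<in> Field (card_of X)" and bF: "b \<in> Field (card_of X)" using assms unfolding Field_card_of by auto
  show ?thesis
  proof (cases "a = b")
    case True
    then show ?thesis using refl_onD[OF R bF] by simp
  next
    case False
    then have "(a, b) \<in> (card_of X) \<or> (b, a) \<in> (card_of X)" using T aF bF unfolding total_on_def by blast
    then show ?thesis using assms(3) False by blast
  qed
qed

lemma union_small:
  assumes inf: "infinite X" and cov: "X \<subseteq> (\<Union>i\<in>I. Y i)" and I: "|I| <o (card_of X)"
    and Y: "\<forall>i\<in>I. |Y i| <o (card_of X)"
  shows "\<exists>K\<subseteq>X. cofinal K (card_of X) \<and> |K| \<le>o |I|"
proof -
  have "\<forall>i\<in>I. \<exists>a. a \<in> X \<and> |Y i| \<le>o |underS (card_of X) a|"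
  proof
    fix i assume i: "i \<in> I"
    then have "|Y i| <o (card_of X)" using Y by blast
    from below_underS[OF this card_of_Well_order]
    show "\<exists>a. a \<in> X \<and> |Y i| \<le>o |underS (card_of X) a|" unfolding Field_card_of by blast
  qed
  then have "\<exists>x. \<forall>i\<in>I. x i \<in> X \<and> |Y i| \<le>o |underS (card_of X) (x i)|" by (rule bchoice)
  then obtain x where x: "\<forall>i\<in>I. x i \<in> X \<and> |Y i| \<le>o |underS (card_of X) (x i)|" by blast
  have "cofinal (x ` I) (card_of X)"
  proof (rule ccontr)
    assume "\<not> cofinal (x ` I) (card_of X)"
    then obtain a where a: "a \<in> X" "\<forall>b\<in>x ` I. \<not> (a \<noteq> b \<and> (a, b) \<in> (card_of X))"
      unfolding cofinal_def Field_card_of by blast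
    have W: "Well_order (card_of X)" by (rule card_of_Well_order)
    then have tr: "trans (card_of X)" "antisym (card_of X)"
      unfolding well_order_on_def linear_order_on_def partial_order_on_def preorder_on_def by auto
    have "\<forall>i\<in>I. |Y i| \<le>o |underS (card_of X) a|"
    proof
      fix i assume i: "i \<in> I"
      have xi: "x i \<in> X" "|Y i| \<le>o |underS (card_of X) (x i)|" using x i by auto
      have "\<not> (a \<noteq> x i \<and> (a, x i) \<in> (card_of X))" using a(2) i by blast
      then have "(x i, a) \<in> (card_of X)" using wo_le_total[OF a(1) xi(1)] by blast
      then have "underS (card_of X) (x i) \<subseteq> underS (card_of X) a" by (rule underS_incr[OF tr(1) tr(2)])
      then have "|underS (card_of X) (x i)| \<le>o |underS (card_of X) a|" by (rule card_of_mono1)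
      then show "|Y i| \<le>o |underS (card_of X) a|" using xi(2) ordLeq_transitive by blast
    qed
    then have s1: "|SIGMA i:I. Y i| \<le>o |SIGMA i:I. underS (card_of X) a|" by (rule card_of_Sigma_mono1)
    have s0: "|X| \<le>o |\<Union>i\<in>I. Y i|" using cov by (rule card_of_mono1)
    have "|X| \<le>o |SIGMA i:I. Y i|" using ordLeq_transitive[OF s0 card_of_UNION_Sigma] .
    then have le: "|X| \<le>o |I \<times> underS (card_of X) a|" using ordLeq_transitive[OF _ s1] by blast
    have aF: "a \<in> Field (card_of X)" using a(1) unfolding Field_card_of .
    have "|underS (card_of X) a| <o (card_of X)"
      by (rule card_of_underS[OF card_of_Card_order aF])
    then have "|I \<times> underS (card_of X) a| <o (card_of X)" using times_less[OF inf I] by blast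
    then show False using le not_ordLess_ordLeq by blast
  qed
  moreover have "x ` I \<subseteq> X" using x by blast
  ultimately show ?thesis using card_of_image[of x I] by blast
qed

lemma self_cofinal:
  assumes "infinite X" shows "cofinal X (card_of X)"
  unfolding cofinal_def
proof
  fix a assume a: "a \<in> Field (card_of X)"
  have nf: "\<not> finite (Field (card_of X))" using assms unfolding Field_card_of .
  have "\<not> (\<exists>a. Field (card_of X) = under (card_of X) a)"
    by (rule Card_order_infinite_not_under[OF card_of_Card_order nf])
  then have "Field (card_of X) \<noteq> under (card_of X) a" by blast
  moreover have "under (card_of X) a \<subseteq> Field (card_of X)" by (rule under_Field)
  ultimately obtain b where b: "b \<in> Field (card_of X)" "b \<notin> under (card_of X) a" by blast
  then have "(b, a) \<notin> (card_of X)" unfolding under_def by auto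
  moreover have "b \<in> X" "a \<in> X" using a b(1) unfolding Field_card_of by auto
  ultimately have "a \<noteq> b \<and> (a, b) \<in> (card_of X)" using wo_le_total[of b X a] by blast
  then show "\<exists>b\<in>X. a \<noteq> b \<and> (a, b) \<in> (card_of X)" using \<open>b \<in> X\<close> by blast
qed

lemma G:
  fixes A :: "'a set" and B :: "'b set" and E :: "('a \<times> 'b) set" and I :: "'i set"
  assumes graph: "lk_graph A B E" and cov: "B \<subseteq> (\<Union>i\<in>I. Dd i)"
    and fam: "\<forall>i\<in>I. Dd i \<subseteq> B \<and> Cc i \<subseteq> A \<and> |Cc i| <o |A| \<and> (\<forall>b\<in>Dd i. infinite {a\<in>Cc i. (a,b)\<in>E})"
    and IB: "|I| <o |B|" and cf: "\<forall>K\<subseteq>B. cofinal K (card_of B) \<longrightarrow> |I| <o |K|"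
  shows "\<exists>C D F. C \<subseteq> A \<and> D \<subseteq> B \<and> F \<subseteq> E \<inter> (C \<times> D) \<and> lk_graph C D F
           \<and> (card_of D) =o (card_of B) \<and> (card_of C) <o (card_of A)"
proof -
  have AB: "|A| <o |B|" and infA: "infinite A" using graph unfolding lk_graph_def by auto
  have ABle: "|A| \<le>o |B|" using AB by (rule ordLess_imp_ordLeq)
  have infB: "infinite B" using card_of_ordLeq_finite[OF ABle] infA by blast
  show ?thesis
  proof (cases "\<exists>i\<in>I. |Dd i| =o |B|")
    case True
    then obtain i where i: "i \<in> I" "|Dd i| =o |B|" by blast
    define C where "C = Cc i"
    define D where "D = Dd i"
    define F where "F = E \<inter> (C \<times> D)"
    have DB: "|D| =o |B|" using i D_def by simp
    have "D \<noteq> {}"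
    proof
      assume "D = {}"
      have "|B| \<le>o |D|" using DB unfolding ordIso_iff_ordLeq by (rule conjunct2)
      then have "finite B" using card_of_ordLeq_finite \<open>D = {}\<close> by blast
      then show False using infB by blast
    qed
    then obtain b where b: "b \<in> D" by blast
    have nb: "\<forall>b\<in>D. infinite {a\<in>C. (a,b)\<in>F}"
    proof
      fix b assume b: "b \<in> D"
      have "{a\<in>C. (a,b)\<in>F} = {a\<in>C. (a,b)\<in>E}" using b F_def by auto
      then show "infinite {a\<in>C. (a,b)\<in>F}" using fam i b C_def D_def by auto
    qed
    have "{a\<in>C. (a,b)\<in>F} \<subseteq> C" by blast
    then have infC: "infinite C" using b nb finite_subset by blast
    have CA: "|C| <o |A|" using fam i C_def by blast
    have "|C| <o |B|" using ordLess_transitive[OF CA AB] .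
    then have "|C| <o |D|" using ordLess_ordIso_trans[OF _ ordIso_symmetric[OF DB]] by blast
    then have "lk_graph C D F" unfolding lk_graph_def using infC nb F_def by auto
    moreover have "C \<subseteq> A" "D \<subseteq> B" using fam i C_def D_def by auto
    ultimately show ?thesis using DB CA F_def by blast
  next
    case False
    have "\<forall>i\<in>I. |Dd i| <o |B|"
    proof
      fix i assume i: "i \<in> I"
      then have "|Dd i| \<le>o |B|" using fam card_of_mono1 by blast
      moreover have "\<not> |Dd i| =o |B|" using False i by blast
      ultimately show "|Dd i| <o |B|" unfolding ordLeq_iff_ordLess_or_ordIso by blast
    qed
    then obtain K where K: "K \<subseteq> B" "cofinal K (card_of B)" "|K| \<le>o |I|"
      using union_small[OF infB cov IB] by blast
    have "|I| <o |K|" using cf K(1) K(2) by blast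
    then show ?thesis using not_ordLess_ordLeq K(3) by blast
  qed
qed

theorem lemma4p3:
  fixes A :: "'a set" and B :: "'b set" and E :: "('a \<times> 'b) set"
  assumes gch: "GCH_on TYPE('b)"
    and graph: "lk_graph A B E"
    and lam_unc: "uncountable A"
    and cf_gt: "\<forall>K\<subseteq>B. cofinal K (card_of B) \<longrightarrow> (card_of A) <o (card_of K)"
    and cf_not_succ: "\<not> (\<exists>M::'b set. countable_cof M \<and> is_cof B (cardSuc (card_of M)))"
  shows "\<exists>C D F. C \<subseteq> A \<and> D \<subseteq> B \<and> F \<subseteq> E \<inter> (C \<times> D) \<and> lk_graph C D F
           \<and> (card_of D) =o (card_of B) \<and> (card_of C) <o (card_of A)"
proof -
  have AB: "|A| <o |B|" and infA: "infinite A" and EAB: "E \<subseteq> A \<times> B"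
    and nbr: "\<forall>b\<in>B. infinite {a\<in>A. (a, b) \<in> E}" using graph unfolding lk_graph_def by auto
  have ABle: "|A| \<le>o |B|" using AB by (rule ordLess_imp_ordLeq)
  have infB: "infinite B" using card_of_ordLeq_finite[OF ABle] infA by blast
  have "\<forall>b\<in>B. \<exists>N. N \<subseteq> {a\<in>A. (a, b) \<in> E} \<and> countable N \<and> infinite N"
    using nbr infinite_countable_subset' by blast
  then have "\<exists>N. \<forall>b\<in>B. N b \<subseteq> {a\<in>A. (a, b) \<in> E} \<and> countable (N b) \<and> infinite (N b)"
    by (rule bchoice)
  then obtain N where N: "\<forall>b\<in>B. N b \<subseteq> {a\<in>A. (a, b) \<in> E} \<and> countable (N b) \<and> infinite (N b)"
    by blast
  show ?thesis
  proof (cases "\<exists>K\<subseteq>A. cofinal K (card_of A) \<and> countable K")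
    case False
    define Dd where "Dd a = {b\<in>B. infinite {x\<in>underS (card_of A) a. (x,b)\<in>E}}" for a
    have cov: "B \<subseteq> (\<Union>a\<in>A. Dd a)"
    proof
      fix b assume b: "b \<in> B"
      have "\<not> cofinal (N b) (card_of A)" using False N b by blast
      then obtain a where a: "a \<in> A" "\<forall>n\<in>N b. \<not> (a \<noteq> n \<and> (a, n) \<in> card_of A)"
        unfolding cofinal_def Field_card_of by blast
      have "N b - {a} \<subseteq> {x\<in>underS (card_of A) a. (x,b)\<in>E}"
      proof
        fix n assume n: "n \<in> N b - {a}"
        then have nA: "n \<in> A" "(n, b) \<in> E" using N b by auto
        have "\<not> (a \<noteq> n \<and> (a, n) \<in> card_of A)" using a(2) n by blast
        then have "(n, a) \<in> card_of A" using wo_le_total[OF a(1) nA(1)] by blast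
        then show "n \<in> {x\<in>underS (card_of A) a. (x,b)\<in>E}" using n nA unfolding underS_def by auto
      qed
      moreover have "infinite (N b - {a})" using N b by auto
      ultimately have "infinite {x\<in>underS (card_of A) a. (x,b)\<in>E}" using finite_subset by blast
      then show "b \<in> (\<Union>a\<in>A. Dd a)" using a b Dd_def by blast
    qed
    have fam: "\<forall>a\<in>A. Dd a \<subseteq> B \<and> underS (card_of A) a \<subseteq> A \<and> |underS (card_of A) a| <o |A| \<and>
        (\<forall>b\<in>Dd a. infinite {x\<in>underS (card_of A) a. (x,b)\<in>E})"
    proof
      fix a assume a: "a \<in> A"
      have "|underS (card_of A) a| <o |A|"
        using card_of_underS[OF card_of_Card_order, of a A] a unfolding Field_card_of by blast
      moreover have "underS (card_of A) a \<subseteq> A" using underS_Field[of _ "card_of A" a] unfolding Field_card_of by blast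
      ultimately show "Dd a \<subseteq> B \<and> underS (card_of A) a \<subseteq> A \<and> |underS (card_of A) a| <o |A| \<and>
        (\<forall>b\<in>Dd a. infinite {x\<in>underS (card_of A) a. (x,b)\<in>E})" using Dd_def by auto
    qed
    show ?thesis using G[OF graph cov fam AB cf_gt] .
  next
    case True
    then obtain K0 where K0: "K0 \<subseteq> A" "cofinal K0 (card_of A)" "countable K0" by blast
    have "\<exists>f. inj_on f A \<and> f ` A \<subseteq> B" using ABle unfolding card_of_ordLeq[symmetric] .
    then obtain f where f: "inj_on f A" "f ` A \<subseteq> B" by blast
    define M where "M = f ` A"
    have bij: "bij_betw f A M" using f M_def bij_betw_imageI by blast
    have AM: "|A| =o |M|" using bij unfolding card_of_ordIso[symmetric] by blast
    have MA: "|M| =o |A|" using ordIso_symmetric[OF AM] .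
    have MB: "M \<subseteq> B" using f M_def by auto
    have infM: "infinite M" using bij infA bij_betw_finite by blast
    have nA: "\<not> |A| \<le>o |UNIV::nat set|" using lam_unc countable_iff_leq_nat by blast
    have uncM: "uncountable M"
    proof
      assume "countable M"
      then have "|M| \<le>o |UNIV::nat set|" using countable_iff_leq_nat by blast
      then have "|A| \<le>o |UNIV::nat set|" using ordIso_ordLeq_trans[OF AM] by blast
      then show False using nA by blast
    qed
    have ccM: "countable_cof M"
    proof -
      have cov: "M \<subseteq> (\<Union>k\<in>K0. f ` underS (card_of A) k)"
      proof
        fix y assume "y \<in> M"
        then obtain x where x: "x \<in> A" "y = f x" using M_def by blast
        then obtain k where "k \<in> K0" "x \<noteq> k" "(x, k) \<in> card_of A"
          using K0 unfolding cofinal_def Field_card_of by blast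
        then show "y \<in> (\<Union>k\<in>K0. f ` underS (card_of A) k)" using x unfolding underS_def by blast
      qed
      have sm: "\<forall>k\<in>K0. |f ` underS (card_of A) k| <o |M|"
      proof
        fix k assume k: "k \<in> K0"
        have "|underS (card_of A) k| <o |A|"
          using card_of_underS[OF card_of_Card_order, of k A] k K0(1) unfolding Field_card_of by blast
        then show "|f ` underS (card_of A) k| <o |M|"
          using ordLeq_ordLess_trans[OF card_of_image] ordLess_ordIso_trans[of _ "|A|", OF _ AM] by blast
      qed
      have "|K0| <o |M|" using countable_less_uncountable K0 uncM by blast
      then obtain K where K: "K \<subseteq> M" "cofinal K (card_of M)" "|K| \<le>o |K0|"
        using union_small[OF infM cov _ sm] by blast
      moreover have "|K0| \<le>o |UNIV::nat set|" using K0(3) countable_iff_leq_nat by blast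
      ultimately have "|K| \<le>o |UNIV::nat set|" using ordLeq_transitive by blast
      then have "countable K" using countable_iff_leq_nat by blast
      then show ?thesis unfolding countable_cof_def using K infM by blast
    qed
    define cs where "cs = cardSuc (card_of M)"
    have csC: "Card_order cs" unfolding cs_def by (rule cardSuc_Card_order[OF card_of_Card_order])
    have Mcs: "|M| <o cs" unfolding cs_def by (rule cardSuc_greater[OF card_of_Card_order])
    have powM: "|Pow M| \<le>o cs"
    proof -
      have F: "|Field cs| =o cs" using card_of_Field_ordIso[OF csC] .
      then have "|M| <o |Field cs|" using ordLess_ordIso_trans[OF Mcs ordIso_symmetric[OF F]] by blast
      then have "|Pow M| \<le>o |Field cs|" using gch infM unfolding GCH_on_def by blast
      then show ?thesis using ordLeq_ordIso_trans[OF _ F] by blast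
    qed
    have PAM: "|Pow A| =o |Pow M|" using bij_betw_Pow[OF bij] unfolding card_of_ordIso[symmetric] by blast
    have low: "\<forall>K\<subseteq>B. cofinal K (card_of B) \<longrightarrow> cs \<le>o |K|"
    proof (intro allI impI)
      fix K assume "K \<subseteq> B" "cofinal K (card_of B)"
      then have "|A| <o |K|" using cf_gt by blast
      then have "|M| <o |K|" using ordIso_ordLess_trans[OF MA] by blast
      then show "cs \<le>o |K|" unfolding cs_def using cardSuc_ordLess_ordLeq[OF card_of_Card_order card_of_Card_order] by blast
    qed
    have big: "\<forall>K\<subseteq>B. cofinal K (card_of B) \<longrightarrow> |Pow A| <o |K|"
    proof (intro allI impI)
      fix K assume K: "K \<subseteq> B" "cofinal K (card_of B)"
      show "|Pow A| <o |K|"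
      proof (rule ccontr)
        assume "\<not> |Pow A| <o |K|"
        then have "|K| \<le>o |Pow A|" using ordLess_or_ordLeq[OF card_of_Well_order card_of_Well_order, of "Pow A" K] by blast
        then have "|K| \<le>o |Pow M|" using ordLeq_ordIso_trans[OF _ PAM] by blast
        then have "|K| \<le>o cs" using ordLeq_transitive[OF _ powM] by blast
        moreover have "cs \<le>o |K|" using low K by blast
        ultimately have "|K| =o cs" unfolding ordIso_iff_ordLeq by blast
        then have "is_cof B cs" unfolding is_cof_def using K low by blast
        then show False using cf_not_succ ccM cs_def by blast
      qed
    qed
    define I where "I = N ` B"
    define Dd where "Dd S = {b\<in>B. N b = S}" for S
    have cov: "B \<subseteq> (\<Union>S\<in>I. Dd S)" using I_def Dd_def by blast
    have fam: "\<forall>S\<in>I. Dd S \<subseteq> B \<and> S \<subseteq> A \<and> |S| <o |A| \<and> (\<forall>b\<in>Dd S. infinite {a\<in>S. (a,b)\<in>E})"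
    proof
      fix S assume "S \<in> I"
      then obtain b where b: "b \<in> B" "S = N b" using I_def by blast
      then have "S \<subseteq> A" "countable S" "infinite S" "\<forall>a\<in>S. (a, b) \<in> E" using N by auto
      moreover have "\<forall>b'\<in>Dd S. {a\<in>S. (a,b')\<in>E} = S" using N Dd_def by auto
      ultimately show "Dd S \<subseteq> B \<and> S \<subseteq> A \<and> |S| <o |A| \<and> (\<forall>b\<in>Dd S. infinite {a\<in>S. (a,b)\<in>E})"
        using countable_less_uncountable lam_unc Dd_def by auto
    qed
    have "I \<subseteq> Pow A" using I_def N by auto
    then have IP: "|I| \<le>o |Pow A|" using card_of_mono1 by blast
    have cfI: "\<forall>K\<subseteq>B. cofinal K (card_of B) \<longrightarrow> |I| <o |K|" using big ordLeq_ordLess_trans[OF IP] by blast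
    have "|I| <o |B|" using cfI self_cofinal[OF infB] by blast
    show ?thesis using G[OF graph cov fam \<open>|I| <o |B|\<close> cfI] .
  qed
qed

end
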